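(* Consider an MDP satisfying Assumption 1(b) and a policy $\pi$ inducing an ergodic chain. Suppose there exist a function $f:S\to[0,\infty)$ and constants $c_1>0$, $c_2\ge0$ such that for all states $s$, $$\mathbb E_\pi\big[f(s_{t+1})-f(s_t)\,\big|\,s_t=s\big]\ \le\ c_1\,r(s,\pi)+c_2.$$ Then there exist constants $c_3,c_4\ge0$ (one may take $c_3=2/c_1$) such that $V_\pi(s)\ge -c_3 f(s)-c_4$ for all $s\in S$.
   Context: MDP setting: countably infinite state space $S$, finite action set $A$, transition kernel $\mathbb P(s'\mid s,a)$, reward $r(s,a)$; for a policy $\pi$, $r(s,\pi)=\sum_a\pi(a\mid s)r(s,a)$ and $(s_t)$ is the Markov chain under $\pi$. $r_{\max}(s)=\max_a r(s,a)$. Assumption 1(b): for every $z\in\mathbb R$ the set $\{s:r_{\max}(s)\ge z\}$ is finite. $J_\pi$ is the average reward of $\pi$ (expectation of $r(s,\pi)$ under the stationary distribution). A distinguished state $\vec 0$ is fixed, and the relative value function $V_\pi$ solves $J_\pi+V_\pi(s)=r(s,\pi)+\sum_{s'}\mathbb P_\pi(s'\mid s)V_\pi(s')$ with $V_\pi(\vec 0)=0$, where $\mathbb P_\pi(s'\mid s)=\sum_a\pi(a\mid s)\mathbb P(s'\mid s,a)$; equivalently $V_\pi(s)$ is the expected sum of $r(s_t,a_t)-J_\pi$ from $s_0=s$ until first hitting $\vec 0$. *)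

theory Defs
  imports "HOL-Analysis.Analysis"
begin

text \<open>MDP with countable state type 's, finite action type 'a,
  transition kernel P s a s' = P(s' | s,a), reward r s a.
  A (stationary randomised) policy is pol s a = pol(a | s).\<close>

definition mdp :: "('s \<Rightarrow> 'a \<Rightarrow> 's \<Rightarrow> real) \<Rightarrow> bool" where
  "mdp P \<longleftrightarrow> (\<forall>s a s'. P s a s' \<ge> 0) \<and> (\<forall>s a. (P s a has_sum 1) UNIV)"

definition policy :: "('s \<Rightarrow> 'a::finite \<Rightarrow> real) \<Rightarrow> bool" where
  "policy pol \<longleftrightarrow> (\<forall>s a. pol s a \<ge> 0) \<and> (\<forall>s. (\<Sum>a\<in>UNIV. pol s a) = 1)"

definition r_pi :: "('s \<Rightarrow> 'a::finite \<Rightarrow> real) \<Rightarrow> ('s \<Rightarrow> 'a \<Rightarrow> real) \<Rightarrow> 's \<Rightarrow> real" where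
  "r_pi r pol s = (\<Sum>a\<in>UNIV. pol s a * r s a)"

definition r_max :: "('s \<Rightarrow> 'a::finite \<Rightarrow> real) \<Rightarrow> 's \<Rightarrow> real" where
  "r_max r s = Max (range (r s))"

definition assumption_1b :: "('s \<Rightarrow> 'a::finite \<Rightarrow> real) \<Rightarrow> bool" where
  "assumption_1b r \<longleftrightarrow> (\<forall>z::real. finite {s. r_max r s \<ge> z})"

definition P_pi :: "('s \<Rightarrow> 'a::finite \<Rightarrow> 's \<Rightarrow> real) \<Rightarrow> ('s \<Rightarrow> 'a \<Rightarrow> real) \<Rightarrow> 's \<Rightarrow> 's \<Rightarrow> real" where
  "P_pi P pol s s' = (\<Sum>a\<in>UNIV. pol s a * P s a s')"

fun P_pi_n :: "('s \<Rightarrow> 'a::finite \<Rightarrow> 's \<Rightarrow> real) \<Rightarrow> ('s \<Rightarrow> 'a \<Rightarrow> real) \<Rightarrow> nat \<Rightarrow> 's \<Rightarrow> 's \<Rightarrow> real" where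
  "P_pi_n P pol 0 s s' = (if s' = s then 1 else 0)"
| "P_pi_n P pol (Suc n) s s' = (\<Sum>\<^sub>\<infinity>u. P_pi_n P pol n s u * P_pi P pol u s')"

definition irreducible :: "('s \<Rightarrow> 'a::finite \<Rightarrow> 's \<Rightarrow> real) \<Rightarrow> ('s \<Rightarrow> 'a \<Rightarrow> real) \<Rightarrow> bool" where
  "irreducible P pol \<longleftrightarrow> (\<forall>s s'. \<exists>n. P_pi_n P pol n s s' > 0)"

definition stationary :: "('s \<Rightarrow> 'a::finite \<Rightarrow> 's \<Rightarrow> real) \<Rightarrow> ('s \<Rightarrow> 'a \<Rightarrow> real) \<Rightarrow> ('s \<Rightarrow> real) \<Rightarrow> bool" where
  "stationary P pol mu \<longleftrightarrow> (\<forall>s. mu s \<ge> 0) \<and> (mu has_sum 1) UNIV \<and>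
     (\<forall>s'. ((\<lambda>s. mu s * P_pi P pol s s') has_sum mu s') UNIV)"

text \<open>Ergodic = irreducible and positive recurrent; for an irreducible chain, positive
  recurrence is equivalent to the existence of a stationary distribution.\<close>
definition ergodic :: "('s \<Rightarrow> 'a::finite \<Rightarrow> 's \<Rightarrow> real) \<Rightarrow> ('s \<Rightarrow> 'a \<Rightarrow> real) \<Rightarrow> bool" where
  "ergodic P pol \<longleftrightarrow> irreducible P pol \<and> (\<exists>mu. stationary P pol mu)"

definition avg_reward :: "('s \<Rightarrow> 'a::finite \<Rightarrow> real) \<Rightarrow> ('s \<Rightarrow> 'a \<Rightarrow> real) \<Rightarrow> ('s \<Rightarrow> real) \<Rightarrow> real" where
  "avg_reward r pol mu = (\<Sum>\<^sub>\<infinity>s. mu s * r_pi r pol s)"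

text \<open>Taboo probabilities: taboo_prob P pol s0 s n s' = Pr_s(s_n = s', s_k \<noteq> s0 for all k \<le> n),
  i.e. the probability that the chain started in s is at s' at time n and the hitting time
  tau = min {t \<ge> 0. s_t = s0} is > n.\<close>
fun taboo_prob :: "('s \<Rightarrow> 'a::finite \<Rightarrow> 's \<Rightarrow> real) \<Rightarrow> ('s \<Rightarrow> 'a \<Rightarrow> real) \<Rightarrow> 's \<Rightarrow> 's \<Rightarrow> nat \<Rightarrow> 's \<Rightarrow> real" where
  "taboo_prob P pol s0 s 0 s' = (if s' = s \<and> s \<noteq> s0 then 1 else 0)"
| "taboo_prob P pol s0 s (Suc n) s' =
     (if s' = s0 then 0 else (\<Sum>\<^sub>\<infinity>u. taboo_prob P pol s0 s n u * P_pi P pol u s'))"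

text \<open>Summand family of V_pi(s) = E_s[ sum_{t < tau} (r(s_t,pol) - J) ], indexed by (t, s_t).\<close>
definition V_terms :: "('s \<Rightarrow> 'a::finite \<Rightarrow> 's \<Rightarrow> real) \<Rightarrow> ('s \<Rightarrow> 'a \<Rightarrow> real) \<Rightarrow> ('s \<Rightarrow> 'a \<Rightarrow> real)
    \<Rightarrow> 's \<Rightarrow> real \<Rightarrow> 's \<Rightarrow> nat \<times> 's \<Rightarrow> real" where
  "V_terms P r pol s0 J s = (\<lambda>(t, s'). taboo_prob P pol s0 s t s' * (r_pi r pol s' - J))"

definition rel_value :: "('s \<Rightarrow> 'a::finite \<Rightarrow> 's \<Rightarrow> real) \<Rightarrow> ('s \<Rightarrow> 'a \<Rightarrow> real) \<Rightarrow> ('s \<Rightarrow> 'a \<Rightarrow> real)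
    \<Rightarrow> 's \<Rightarrow> real \<Rightarrow> 's \<Rightarrow> real" where
  "rel_value P r pol s0 J s = (\<Sum>\<^sub>\<infinity>x. V_terms P r pol s0 J s x)"

end

theory Submission imports Defs begin



lemma enn_conv:
  fixes g :: "'b \<Rightarrow> real"
  assumes nn: "\<And>x. g x \<ge> 0" and fin: "(\<integral>\<^sup>+x. ennreal (g x) \<partial>count_space UNIV) \<noteq> \<infinity>"
  shows "g summable_on UNIV \<and> (\<integral>\<^sup>+x. ennreal (g x) \<partial>count_space UNIV) = ennreal (infsum g UNIV)"
proof -
  have int: "integrable (count_space UNIV) g"
    using fin nn by (auto intro!: integrableI_nonneg simp: less_top)
  hence as: "Infinite_Set_Sum.abs_summable_on g UNIV" by (simp add: abs_summable_on_def)
  hence s: "g summable_on UNIV"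
    by (metis abs_summable_equivalent abs_summable_summable)
  have "infsetsum g UNIV = infsum g UNIV" using infsetsum_infsum[OF as] .
  moreover have "(\<integral>\<^sup>+x. ennreal (g x) \<partial>count_space UNIV) = ennreal (infsetsum g UNIV)"
    using nn_integral_conv_infsetsum[OF as] nn by simp
  ultimately show ?thesis using s by simp
qed

lemma enn_conv2:
  fixes g :: "'b \<Rightarrow> real"
  assumes nn: "\<And>x. g x \<ge> 0" and s: "g summable_on UNIV"
  shows "(\<integral>\<^sup>+x. ennreal (g x) \<partial>count_space UNIV) = ennreal (infsum g UNIV)"
proof -
  have "Infinite_Sum.abs_summable_on g UNIV"
    using s nn by (simp add: summable_on_iff_abs_summable_on_real[symmetric])
  hence as: "Infinite_Set_Sum.abs_summable_on g UNIV" using abs_summable_equivalent by blast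
  have "infsetsum g UNIV = infsum g UNIV" using infsetsum_infsum[OF as] .
  moreover have "(\<integral>\<^sup>+x. ennreal (g x) \<partial>count_space UNIV) = ennreal (infsetsum g UNIV)"
    using nn_integral_conv_infsetsum[OF as] nn by simp
  ultimately show ?thesis by simp
qed




lemma nn_swap:
  fixes F :: "'x::countable \<Rightarrow> 'y \<Rightarrow> ennreal"
  shows "(\<integral>\<^sup>+x. (\<integral>\<^sup>+y. F x y \<partial>count_space UNIV) \<partial>count_space UNIV)
       = (\<integral>\<^sup>+y. (\<integral>\<^sup>+x. F x y \<partial>count_space UNIV) \<partial>count_space UNIV)"
  by (rule nn_integral_count_space_nn_integral[symmetric]) auto

lemma point_le_nn:
  fixes g :: "'b \<Rightarrow> ennreal"
  shows "g x \<le> (\<integral>\<^sup>+y. g y \<partial>count_space UNIV)"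
proof -
  have "(\<integral>\<^sup>+y. g x * indicator {x} y \<partial>count_space UNIV) = g x"
    by (simp add: nn_integral_cmult_indicator)
  moreover have "(\<integral>\<^sup>+y. g x * indicator {x} y \<partial>count_space UNIV) \<le> (\<integral>\<^sup>+y. g y \<partial>count_space UNIV)"
    by (intro nn_integral_mono) (auto split: split_indicator)
  ultimately show ?thesis by simp
qed

locale ch =
  fixes P :: "'s::countable \<Rightarrow> 'a::finite \<Rightarrow> 's \<Rightarrow> real" and pol :: "'s \<Rightarrow> 'a \<Rightarrow> real" and s0 :: 's
  assumes mdp: "mdp P" and pol: "policy pol"
begin

abbreviation "Q \<equiv> P_pi P pol"

lemma Q_nn: "Q u x \<ge> 0"
  using mdp pol unfolding mdp_def policy_def P_pi_def by (auto intro!: sum_nonneg)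

lemma Q_int: "(\<integral>\<^sup>+x. ennreal (Q u x) \<partial>count_space UNIV) = 1"
proof -
  have P1: "(\<integral>\<^sup>+x. ennreal (P u a x) \<partial>count_space UNIV) = 1" for a
    using enn_conv2[of "P u a"] mdp unfolding mdp_def
    by (metis ennreal_1 has_sum_imp_summable infsumI)
  have "(\<integral>\<^sup>+x. ennreal (Q u x) \<partial>count_space UNIV)
      = (\<integral>\<^sup>+x. (\<Sum>a\<in>UNIV. ennreal (pol u a) * ennreal (P u a x)) \<partial>count_space UNIV)"
    unfolding P_pi_def using mdp pol unfolding mdp_def policy_def
    by (intro nn_integral_cong) (simp add: ennreal_mult'' mult_nonneg_nonneg flip: sum_ennreal)
  also have "\<dots> = (\<Sum>a\<in>UNIV. ennreal (pol u a) * (\<integral>\<^sup>+x. ennreal (P u a x) \<partial>count_space UNIV))"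
    by (simp add: nn_integral_sum nn_integral_cmult)
  also have "\<dots> = ennreal (\<Sum>a\<in>UNIV. pol u a)"
    using pol unfolding policy_def by (simp add: P1 sum_ennreal)
  also have "\<dots> = 1" using pol unfolding policy_def by simp
  finally show ?thesis .
qed

lemma Q_le1: "Q u x \<le> 1"
  using point_le_nn[of "\<lambda>x. ennreal (Q u x)" x] Q_int Q_nn by simp

end


context ch begin

abbreviation "q s n x \<equiv> taboo_prob P pol s0 s n x"

lemma step_int:
  assumes "\<And>u. a u \<ge> 0"
  shows "(\<integral>\<^sup>+x. (\<integral>\<^sup>+u. ennreal (a u * Q u x) \<partial>count_space UNIV) \<partial>count_space UNIV)
       = (\<integral>\<^sup>+u. ennreal (a u) \<partial>count_space UNIV)"
proof -
  have "(\<integral>\<^sup>+x. (\<integral>\<^sup>+u. ennreal (a u * Q u x) \<partial>count_space UNIV) \<partial>count_space UNIV)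
      = (\<integral>\<^sup>+u. (\<integral>\<^sup>+x. ennreal (a u) * ennreal (Q u x) \<partial>count_space UNIV) \<partial>count_space UNIV)"
    by (subst nn_swap) (simp add: ennreal_mult assms Q_nn)
  also have "\<dots> = (\<integral>\<^sup>+u. ennreal (a u) \<partial>count_space UNIV)"
    by (simp add: nn_integral_cmult Q_int)
  finally show ?thesis .
qed

lemma step_pt:
  assumes "\<And>u. a u \<ge> 0" and "(\<integral>\<^sup>+u. ennreal (a u) \<partial>count_space UNIV) \<noteq> \<infinity>"
  shows "(\<lambda>u. a u * Q u x) summable_on UNIV \<and>
     ennreal (infsum (\<lambda>u. a u * Q u x) UNIV) = (\<integral>\<^sup>+u. ennreal (a u * Q u x) \<partial>count_space UNIV)"
proof -
  have "(\<integral>\<^sup>+u. ennreal (a u * Q u x) \<partial>count_space UNIV) \<le> (\<integral>\<^sup>+u. ennreal (a u) \<partial>count_space UNIV)"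
    by (intro nn_integral_mono) (simp add: assms Q_nn Q_le1 mult_left_le)
  hence "(\<integral>\<^sup>+u. ennreal (a u * Q u x) \<partial>count_space UNIV) \<noteq> \<infinity>"
    using assms(2) by (metis infinity_ennreal_def top.extremum_uniqueI)
  from enn_conv[OF _ this] show ?thesis using assms Q_nn by auto
qed

lemma q_nn: "q s n x \<ge> 0"
  by (induction n arbitrary: x) (auto intro!: infsum_nonneg mult_nonneg_nonneg Q_nn)

lemma q_main: "(\<integral>\<^sup>+u. ennreal (q s n u) \<partial>count_space UNIV) \<le> 1 \<and>
   (\<forall>x. ennreal (q s (Suc n) x) = (if x = s0 then 0 else \<integral>\<^sup>+u. ennreal (q s n u * Q u x) \<partial>count_space UNIV))"
proof (induction n)
  case 0
  have a: "(\<integral>\<^sup>+u. ennreal (q s 0 u) \<partial>count_space UNIV) \<le> 1"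
  proof -
    have "(\<integral>\<^sup>+u. ennreal (q s 0 u) \<partial>count_space UNIV) \<le> (\<integral>\<^sup>+u. indicator {s} u \<partial>count_space UNIV)"
      by (intro nn_integral_mono) (auto split: split_indicator)
    thus ?thesis by simp
  qed
  have fin: "(\<integral>\<^sup>+u. ennreal (q s 0 u) \<partial>count_space UNIV) \<noteq> \<infinity>"
    using a by (metis ennreal_one_neq_top infinity_ennreal_def top.extremum_uniqueI)
  show ?case using a step_pt[OF q_nn fin] by auto
next
  case (Suc n)
  have fin: "(\<integral>\<^sup>+u. ennreal (q s n u) \<partial>count_space UNIV) \<noteq> \<infinity>"
    using Suc by (metis ennreal_one_neq_top infinity_ennreal_def top.extremum_uniqueI)
  have a: "(\<integral>\<^sup>+u. ennreal (q s (Suc n) u) \<partial>count_space UNIV) \<le> 1"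
  proof -
    have "(\<integral>\<^sup>+u. ennreal (q s (Suc n) u) \<partial>count_space UNIV)
        \<le> (\<integral>\<^sup>+x. (\<integral>\<^sup>+u. ennreal (q s n u * Q u x) \<partial>count_space UNIV) \<partial>count_space UNIV)"
      using Suc by (intro nn_integral_mono) (auto simp del: taboo_prob.simps)
    also have "\<dots> = (\<integral>\<^sup>+u. ennreal (q s n u) \<partial>count_space UNIV)"
      by (rule step_int[OF q_nn])
    finally show ?thesis using Suc by (meson order_trans)
  qed
  have fin2: "(\<integral>\<^sup>+u. ennreal (q s (Suc n) u) \<partial>count_space UNIV) \<noteq> \<infinity>"
    using a by (metis ennreal_one_neq_top infinity_ennreal_def top.extremum_uniqueI)
  show ?case using a step_pt[OF q_nn fin2] by auto
qed

end


context ch begin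

abbreviation "Pn n x y \<equiv> P_pi_n P pol n x y"

lemma Pn_main: "(\<forall>y. Pn n x y \<ge> 0) \<and> (\<integral>\<^sup>+y. ennreal (Pn n x y) \<partial>count_space UNIV) = 1 \<and>
   (\<forall>y. ennreal (Pn (Suc n) x y) = (\<integral>\<^sup>+u. ennreal (Pn n x u * Q u y) \<partial>count_space UNIV))"
proof (induction n)
  case 0
  have a: "(\<integral>\<^sup>+y. ennreal (Pn 0 x y) \<partial>count_space UNIV) = 1"
  proof -
    have "(\<integral>\<^sup>+u. ennreal (Pn 0 x u) \<partial>count_space UNIV) = (\<integral>\<^sup>+u. indicator {x} u \<partial>count_space UNIV)"
      by (intro nn_integral_cong) (auto split: split_indicator)
    thus ?thesis by simp
  qed
  have nn: "\<And>y. Pn 0 x y \<ge> 0" by simp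
  show ?case using a step_pt[OF nn] by simp
next
  case (Suc n)
  have nn: "\<And>y. Pn (Suc n) x y \<ge> 0"
    using Suc by (auto intro!: infsum_nonneg mult_nonneg_nonneg Q_nn)
  have a: "(\<integral>\<^sup>+y. ennreal (Pn (Suc n) x y) \<partial>count_space UNIV) = 1"
    using Suc step_int[of "Pn n x"] by simp
  show ?case using a nn step_pt[OF nn] by simp
qed

lemma Pn_nn: "Pn n x y \<ge> 0" using Pn_main by blast

lemma q_s0: "q s n s0 = 0" by (cases n) auto

lemma q_le_Pn: "q x n y \<le> Pn n x y"
proof (induction n arbitrary: y)
  case 0 then show ?case by simp
next
  case (Suc n)
  show ?case
  proof (cases "y = s0")
    case True then show ?thesis using Pn_nn[of "Suc n" x y] q_s0[of x "Suc n"] by (simp del: P_pi_n.simps taboo_prob.simps)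
  next
    case False
    have "ennreal (q x (Suc n) y) = (\<integral>\<^sup>+u. ennreal (q x n u * Q u y) \<partial>count_space UNIV)"
      using q_main[of x n, THEN conjunct2, rule_format, of y] False by (simp del: taboo_prob.simps)
    also have "\<dots> \<le> (\<integral>\<^sup>+u. ennreal (Pn n x u * Q u y) \<partial>count_space UNIV)"
      by (intro nn_integral_mono ennreal_leI mult_right_mono Suc Q_nn)
    also have "\<dots> = ennreal (Pn (Suc n) x y)" using Pn_main by simp
    finally show ?thesis using Pn_nn[of "Suc n" x y] by (simp del: taboo_prob.simps P_pi_n.simps)
  qed
qed

definition m :: "'s \<Rightarrow> nat \<Rightarrow> ennreal" where
  "m s n = (\<integral>\<^sup>+u. ennreal (q s n u) \<partial>count_space UNIV)"

lemma m_le1: "m s n \<le> 1" using q_main unfolding m_def by blast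

lemma m_hit: "m x n + ennreal (Pn n x s0) \<le> 1"
proof -
  have "m x n + ennreal (Pn n x s0) = (\<integral>\<^sup>+u. ennreal (q x n u) + ennreal (Pn n x s0) * indicator {s0} u \<partial>count_space UNIV)"
    unfolding m_def by (subst nn_integral_add) (auto simp: nn_integral_cmult_indicator)
  also have "\<dots> \<le> (\<integral>\<^sup>+u. ennreal (Pn n x u) \<partial>count_space UNIV)"
    by (intro nn_integral_mono) (auto split: split_indicator simp: q_s0 q_le_Pn intro: ennreal_leI)
  also have "\<dots> = 1" using Pn_main by blast
  finally show ?thesis .
qed

lemma m_mono: "m s (Suc n) \<le> m s n"
proof -
  have "m s (Suc n) \<le> (\<integral>\<^sup>+x. (\<integral>\<^sup>+u. ennreal (q s n u * Q u x) \<partial>count_space UNIV) \<partial>count_space UNIV)"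
    unfolding m_def using q_main[of s n] by (intro nn_integral_mono) (auto simp del: taboo_prob.simps)
  also have "\<dots> = m s n" unfolding m_def by (rule step_int[OF q_nn])
  finally show ?thesis .
qed

lemma m_mono': "n \<le> k \<Longrightarrow> m s k \<le> m s n"
  by (induction k rule: dec_induct) (auto intro: order_trans[OF m_mono])

lemma m0: "m s 0 = (if s = s0 then 0 else 1)"
proof -
  have "m s 0 = (\<integral>\<^sup>+u. (if s = s0 then 0 else 1) * indicator {s} u \<partial>count_space UNIV)"
    unfolding m_def by (intro nn_integral_cong) (auto split: split_indicator)
  thus ?thesis by (simp add: nn_integral_cmult_indicator)
qed

lemma q_fs: "x \<noteq> s0 \<Longrightarrow> ennreal (q x (Suc n) z) = (\<integral>\<^sup>+y. ennreal (Q x y) * ennreal (q y n z) \<partial>count_space UNIV)"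
proof (induction n arbitrary: z)
  case 0
  show ?case
  proof (cases "z = s0")
    case True
    have h0: "\<And>y. ennreal (Q x y) * ennreal (q y 0 z) = 0" using True by auto
    have "(\<integral>\<^sup>+y. ennreal (Q x y) * ennreal (q y 0 z) \<partial>count_space UNIV) = 0"
      by (simp only: h0) simp
    then show ?thesis using True q_s0[of x "Suc 0"] by simp
  next
    case False
    have "ennreal (q x (Suc 0) z) = (\<integral>\<^sup>+u. ennreal (q x 0 u * Q u z) \<partial>count_space UNIV)"
      using q_main[of x 0, THEN conjunct2, rule_format, of z] False by (simp del: taboo_prob.simps)
    also have "\<dots> = (\<integral>\<^sup>+u. ennreal (Q x z) * indicator {x} u \<partial>count_space UNIV)"
      using 0 by (intro nn_integral_cong) (auto split: split_indicator)
    also have "\<dots> = (\<integral>\<^sup>+y. ennreal (Q x z) * indicator {z} y \<partial>count_space UNIV)"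
      by (simp add: nn_integral_cmult_indicator)
    also have "\<dots> = (\<integral>\<^sup>+y. ennreal (Q x y) * ennreal (q y 0 z) \<partial>count_space UNIV)"
      using False by (intro nn_integral_cong) (auto split: split_indicator)
    finally show ?thesis .
  qed
next
  case (Suc n)
  show ?case
  proof (cases "z = s0")
    case True then show ?thesis by simp
  next
    case False
    have "ennreal (q x (Suc (Suc n)) z) = (\<integral>\<^sup>+u. ennreal (q x (Suc n) u) * ennreal (Q u z) \<partial>count_space UNIV)"
      using q_main[of x "Suc n"] False by (simp del: taboo_prob.simps add: ennreal_mult q_nn Q_nn)
    also have "\<dots> = (\<integral>\<^sup>+u. (\<integral>\<^sup>+y. ennreal (Q x y) * ennreal (q y n u) * ennreal (Q u z) \<partial>count_space UNIV) \<partial>count_space UNIV)"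
      using Suc by (simp add: nn_integral_multc)
    also have "\<dots> = (\<integral>\<^sup>+y. (\<integral>\<^sup>+u. ennreal (Q x y) * (ennreal (q y n u) * ennreal (Q u z)) \<partial>count_space UNIV) \<partial>count_space UNIV)"
      by (subst nn_swap) (simp add: mult.assoc)
    also have "\<dots> = (\<integral>\<^sup>+y. ennreal (Q x y) * ennreal (q y (Suc n) z) \<partial>count_space UNIV)"
      using q_main False by (simp add: nn_integral_cmult ennreal_mult q_nn Q_nn del: taboo_prob.simps)
    finally show ?thesis .
  qed
qed

lemma m_fs: "x \<noteq> s0 \<Longrightarrow> m x (Suc n) = (\<integral>\<^sup>+y. ennreal (Q x y) * m y n \<partial>count_space UNIV)"
  unfolding m_def
  by (simp add: q_fs del: taboo_prob.simps) (subst nn_swap, simp add: nn_integral_cmult)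

end


context ch begin

lemma drift_sum:
  fixes Phi w :: "'s \<Rightarrow> ennreal" and C :: ennreal
  assumes dr: "\<And>u. u \<noteq> s0 \<Longrightarrow> (\<integral>\<^sup>+x. ennreal (Q u x) * Phi x \<partial>count_space UNIV) + w u \<le> Phi u + C"
  shows "(\<Sum>n<K. \<integral>\<^sup>+u. ennreal (q s n u) * w u \<partial>count_space UNIV) \<le> Phi s + C * (\<Sum>n<K. m s n)"
proof -
  define T where "T n = (\<integral>\<^sup>+u. ennreal (q s n u) * Phi u \<partial>count_space UNIV)" for n
  define W where "W n = (\<integral>\<^sup>+u. ennreal (q s n u) * w u \<partial>count_space UNIV)" for n
  have step: "T (Suc n) + W n \<le> T n + C * m s n" for n
  proof -
    have "T (Suc n) \<le> (\<integral>\<^sup>+x. (\<integral>\<^sup>+u. ennreal (q s n u) * ennreal (Q u x) \<partial>count_space UNIV) * Phi x \<partial>count_space UNIV)"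
      unfolding T_def
    proof (intro nn_integral_mono)
      fix x
      show "ennreal (q s (Suc n) x) * Phi x \<le> (\<integral>\<^sup>+u. ennreal (q s n u) * ennreal (Q u x) \<partial>count_space UNIV) * Phi x"
        using q_main[of s n, THEN conjunct2, rule_format, of x]
        by (cases "x = s0") (simp_all add: ennreal_mult q_nn Q_nn del: taboo_prob.simps)
    qed
    also have "\<dots> = (\<integral>\<^sup>+u. ennreal (q s n u) * (\<integral>\<^sup>+x. ennreal (Q u x) * Phi x \<partial>count_space UNIV) \<partial>count_space UNIV)"
      by (simp add: nn_integral_multc[symmetric] nn_integral_cmult[symmetric] mult.assoc) (subst nn_swap, rule refl)
    finally have "T (Suc n) + W n \<le> (\<integral>\<^sup>+u. ennreal (q s n u) * (\<integral>\<^sup>+x. ennreal (Q u x) * Phi x \<partial>count_space UNIV) \<partial>count_space UNIV) + W n"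
      by (rule add_right_mono)
    also have "\<dots> = (\<integral>\<^sup>+u. ennreal (q s n u) * ((\<integral>\<^sup>+x. ennreal (Q u x) * Phi x \<partial>count_space UNIV) + w u) \<partial>count_space UNIV)"
      unfolding W_def by (subst nn_integral_add[symmetric]) (auto simp: distrib_left)
    also have "\<dots> \<le> (\<integral>\<^sup>+u. ennreal (q s n u) * (Phi u + C) \<partial>count_space UNIV)"
    proof (intro nn_integral_mono)
      fix u show "ennreal (q s n u) * ((\<integral>\<^sup>+x. ennreal (Q u x) * Phi x \<partial>count_space UNIV) + w u) \<le> ennreal (q s n u) * (Phi u + C)"
        using dr[of u] q_s0[of s n] by (cases "u = s0") (auto intro: mult_left_mono simp del: taboo_prob.simps)
    qed
    also have "\<dots> = T n + C * m s n"
    proof -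
      have "(\<integral>\<^sup>+u. ennreal (q s n u) * (Phi u + C) \<partial>count_space UNIV)
          = (\<integral>\<^sup>+u. ennreal (q s n u) * Phi u + C * ennreal (q s n u) \<partial>count_space UNIV)"
        by (intro nn_integral_cong) (simp add: distrib_right mult.commute)
      also have "\<dots> = T n + C * m s n"
        unfolding T_def m_def by (simp add: nn_integral_add nn_integral_cmult)
      finally show ?thesis .
    qed
    finally show ?thesis .
  qed
  have ind: "T K + (\<Sum>n<K. W n) \<le> T 0 + C * (\<Sum>n<K. m s n)" for K
  proof (induction K)
    case 0 then show ?case by simp
  next
    case (Suc K)
    have "T (Suc K) + (\<Sum>n<Suc K. W n) = (T (Suc K) + W K) + (\<Sum>n<K. W n)" by (simp add: add_ac)
    also have "\<dots> \<le> (T K + C * m s K) + (\<Sum>n<K. W n)" using step by (rule add_right_mono)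
    also have "\<dots> = (T K + (\<Sum>n<K. W n)) + C * m s K" by (simp add: add_ac)
    also have "\<dots> \<le> (T 0 + C * (\<Sum>n<K. m s n)) + C * m s K" using Suc by (rule add_right_mono)
    also have "\<dots> = T 0 + C * (\<Sum>n<Suc K. m s n)" by (simp add: add_ac distrib_left)
    finally show ?case .
  qed
  have T0: "T 0 \<le> Phi s"
  proof -
    have "T 0 \<le> (\<integral>\<^sup>+u. Phi s * indicator {s} u \<partial>count_space UNIV)"
      unfolding T_def by (intro nn_integral_mono) (auto split: split_indicator)
    thus ?thesis by (simp add: nn_integral_cmult_indicator)
  qed
  have "(\<Sum>n<K. W n) \<le> T K + (\<Sum>n<K. W n)" by simp
  also have "\<dots> \<le> Phi s + C * (\<Sum>n<K. m s n)" using ind[of K] T0 by (meson add_right_mono order_trans)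
  finally show ?thesis unfolding W_def .
qed

end


context ch begin

lemma h_drift:
  assumes "u \<noteq> s0"
  shows "(\<integral>\<^sup>+x. ennreal (Q u x) * (\<Sum>n<H. m x n) \<partial>count_space UNIV) + 1 = (\<Sum>n<H. m u n) + m u H"
proof -
  have "(\<integral>\<^sup>+x. ennreal (Q u x) * (\<Sum>n<H. m x n) \<partial>count_space UNIV)
      = (\<Sum>n<H. \<integral>\<^sup>+x. ennreal (Q u x) * m x n \<partial>count_space UNIV)"
    by (simp add: sum_distrib_left nn_integral_sum)
  also have "\<dots> = (\<Sum>n<H. m u (Suc n))" using m_fs[OF assms] by simp
  finally have "(\<integral>\<^sup>+x. ennreal (Q u x) * (\<Sum>n<H. m x n) \<partial>count_space UNIV) + 1 = (\<Sum>n<H. m u (Suc n)) + m u 0"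
    using m0 assms by simp
  also have "\<dots> = (\<Sum>n<H. m u n) + m u H"
    using sum.lessThan_Suc_shift[of "m u" H] sum.lessThan_Suc[of "m u" H] by (simp add: add.commute)
  finally show ?thesis .
qed

lemma h_drift2:
  assumes "u \<noteq> s0" and "m u H + d \<le> 1"
  shows "(\<integral>\<^sup>+x. ennreal (Q u x) * (\<Sum>n<H. m x n) \<partial>count_space UNIV) + d \<le> (\<Sum>n<H. m u n)"
proof -
  let ?I = "(\<integral>\<^sup>+x. ennreal (Q u x) * (\<Sum>n<H. m x n) \<partial>count_space UNIV)"
  have "(?I + d) + 1 = (?I + 1) + d" by (simp add: add_ac)
  also have "\<dots> = (\<Sum>n<H. m u n) + (m u H + d)" using h_drift[OF assms(1)] by (simp add: add_ac)
  also have "\<dots> \<le> (\<Sum>n<H. m u n) + 1" using assms(2) by (rule add_left_mono)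
  finally show ?thesis by (simp add: ennreal_add_left_cancel_le add.commute)
qed

end


context ch begin

lemma bound_W:
  fixes f rp :: "'s \<Rightarrow> real" and A :: "'s set"
  assumes fnn: "\<And>s. f s \<ge> 0"
    and drift: "\<And>u. (\<lambda>x. Q u x * f x) summable_on UNIV \<and> (\<Sum>\<^sub>\<infinity>x. Q u x * f x) - f u \<le> c1 * rp u + c2"
    and c1: "c1 > 0" and c2: "c2 \<ge> 0" and R: "R \<ge> 1" and rpR: "\<And>x. rp x \<le> R"
    and Adef: "A = {x. c1 * (R - rp x) < 2 * (c2 + c1 * R)}"
    and dpos: "d > 0" and dH: "\<And>x. x \<in> A \<Longrightarrow> x \<noteq> s0 \<Longrightarrow> m x H + ennreal d \<le> 1"
  shows "(\<Sum>n<K. \<integral>\<^sup>+u. ennreal (q s n u) * ennreal (c1 * (R - rp u)) \<partial>count_space UNIV)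
            \<le> ennreal (2 * (f s + (2 * (c2 + c1 * R) / d) * H))
       \<and> ennreal (2 * (c2 + c1 * R)) * (\<Sum>n<K. m s n) \<le> ennreal (2 * (f s + (2 * (c2 + c1 * R) / d) * H))"
proof -
  define C where "C = c2 + c1 * R"
  have Cpos: "C > 0" unfolding C_def using c1 c2 R by (smt (verit) mult_pos_pos)
  define lam where "lam = 2 * C / d"
  have lam: "lam \<ge> 0" "lam * d = 2 * C" unfolding lam_def using dpos Cpos by auto
  define g where "g u = c1 * (R - rp u)" for u
  have gnn: "g u \<ge> 0" for u unfolding g_def using c1 rpR[of u] by simp
  define h where "h x = (\<Sum>n<H. m x n)" for x
  define w where "w u = ennreal (g u) + ennreal (2 * C) * indicator A u" for u
  define Phi where "Phi x = ennreal (f x) + ennreal lam * h x" for x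
  have drf: "(\<integral>\<^sup>+x. ennreal (Q u x) * Phi x \<partial>count_space UNIV) + w u \<le> Phi u + ennreal C" if u: "u \<noteq> s0" for u
  proof -
    have Qf: "(\<integral>\<^sup>+x. ennreal (Q u x) * ennreal (f x) \<partial>count_space UNIV) + ennreal (g u) \<le> ennreal (f u) + ennreal C"
    proof -
      have "(\<integral>\<^sup>+x. ennreal (Q u x) * ennreal (f x) \<partial>count_space UNIV) = ennreal (\<Sum>\<^sub>\<infinity>x. Q u x * f x)"
        using enn_conv2[of "\<lambda>x. Q u x * f x"] drift[of u] Q_nn fnn by (simp add: ennreal_mult)
      moreover have "(\<Sum>\<^sub>\<infinity>x. Q u x * f x) + g u \<le> f u + C"
        using drift[of u] unfolding g_def C_def by (simp add: algebra_simps)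
      moreover have "(\<Sum>\<^sub>\<infinity>x. Q u x * f x) \<ge> 0" using Q_nn fnn by (simp add: infsum_nonneg)
      ultimately show ?thesis using gnn fnn Cpos
        by (metis ennreal_leI ennreal_plus less_imp_le)
    qed
    have Qh: "(\<integral>\<^sup>+x. ennreal (Q u x) * h x \<partial>count_space UNIV) + ennreal d * indicator A u \<le> h u"
    proof (cases "u \<in> A")
      case True then show ?thesis using h_drift2[OF u dH[OF True u]] unfolding h_def by simp
    next
      case False then show ?thesis using h_drift2[OF u, of H 0] m_le1 unfolding h_def by simp
    qed
    have "(\<integral>\<^sup>+x. ennreal (Q u x) * Phi x \<partial>count_space UNIV)
        = (\<integral>\<^sup>+x. ennreal (Q u x) * ennreal (f x) \<partial>count_space UNIV) + ennreal lam * (\<integral>\<^sup>+x. ennreal (Q u x) * h x \<partial>count_space UNIV)"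
      unfolding Phi_def by (simp add: distrib_left nn_integral_add nn_integral_cmult[symmetric] mult.left_commute)
    hence "(\<integral>\<^sup>+x. ennreal (Q u x) * Phi x \<partial>count_space UNIV) + w u
        = ((\<integral>\<^sup>+x. ennreal (Q u x) * ennreal (f x) \<partial>count_space UNIV) + ennreal (g u))
          + ennreal lam * ((\<integral>\<^sup>+x. ennreal (Q u x) * h x \<partial>count_space UNIV) + ennreal d * indicator A u)"
      unfolding w_def using lam
      by (simp add: distrib_left add_ac mult.assoc[symmetric] ennreal_mult[symmetric] dpos[THEN less_imp_le])
    also have "\<dots> \<le> (ennreal (f u) + ennreal C) + ennreal lam * h u"
      by (intro add_mono Qf mult_left_mono Qh) auto
    also have "\<dots> = Phi u + ennreal C" unfolding Phi_def by (simp add: add_ac)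
    finally show ?thesis .
  qed
  define X where "X = (\<Sum>n<K. \<integral>\<^sup>+u. ennreal (q s n u) * w u \<partial>count_space UNIV)"
  have X1: "X \<le> Phi s + ennreal C * (\<Sum>n<K. m s n)"
    unfolding X_def by (rule drift_sum[OF drf])
  have wge: "ennreal (2 * C) \<le> w u" for u
  proof (cases "u \<in> A")
    case True then show ?thesis unfolding w_def by simp
  next
    case False then have "2 * C \<le> g u" unfolding Adef g_def C_def by simp
    then show ?thesis unfolding w_def using False by (simp add: ennreal_leI)
  qed
  have X2: "ennreal (2 * C) * (\<Sum>n<K. m s n) \<le> X"
    unfolding X_def sum_distrib_left
  proof (intro sum_mono)
    fix n
    have "ennreal (2 * C) * m s n = (\<integral>\<^sup>+u. ennreal (q s n u) * ennreal (2 * C) \<partial>count_space UNIV)"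
      unfolding m_def by (subst nn_integral_multc) (simp_all add: mult.commute)
    also have "\<dots> \<le> (\<integral>\<^sup>+u. ennreal (q s n u) * w u \<partial>count_space UNIV)"
      by (intro nn_integral_mono mult_left_mono wge) auto
    finally show "ennreal (2 * C) * m s n \<le> \<dots>" .
  qed
  have hs: "h s \<le> of_nat H"
  proof -
    have "h s \<le> (\<Sum>n<H. 1)" unfolding h_def by (intro sum_mono m_le1)
    thus ?thesis by simp
  qed
  have Phis: "Phi s \<le> ennreal (f s + lam * H)"
  proof -
    have "Phi s \<le> ennreal (f s) + ennreal lam * of_nat H" unfolding Phi_def
      by (intro add_left_mono mult_left_mono hs) auto
    thus ?thesis using fnn lam by (simp add: ennreal_plus ennreal_mult ennreal_of_nat_eq_real_of_nat)
  qed
  have msum: "(\<Sum>n<K. m s n) \<le> of_nat K"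
  proof -
    have "(\<Sum>n<K. m s n) \<le> (\<Sum>n<K. 1)" by (intro sum_mono m_le1)
    thus ?thesis by simp
  qed
  have Xfin: "X \<noteq> \<infinity>"
  proof -
    have "X \<le> ennreal (f s + lam * H) + ennreal C * of_nat K"
      using X1 Phis msum by (meson add_mono mult_left_mono order_trans zero_le)
    moreover have "ennreal (f s + lam * H) + ennreal C * of_nat K < \<infinity>"
      by (simp add: ennreal_of_nat_eq_real_of_nat ennreal_mult_less_top)
    ultimately show ?thesis by (metis infinity_ennreal_def leD top.not_eq_extremum)
  qed
  have "X + X \<le> (Phi s + ennreal C * (\<Sum>n<K. m s n)) + (Phi s + ennreal C * (\<Sum>n<K. m s n))"
    using X1 by (rule add_mono) (rule X1)
  also have "\<dots> = (Phi s + Phi s) + ennreal (2 * C) * (\<Sum>n<K. m s n)"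
  proof -
    have "ennreal (2 * C) = ennreal (C + C)" by simp
    also have "\<dots> = ennreal C + ennreal C" using Cpos by (intro ennreal_plus) auto
    finally have e: "ennreal (2 * C) = ennreal C + ennreal C" .
    show ?thesis unfolding e by (simp only: distrib_right add.assoc add.left_commute)
  qed
  also have "\<dots> \<le> (Phi s + Phi s) + X" using X2 by (rule add_left_mono)
  finally have "X + X \<le> X + (Phi s + Phi s)" by (simp only: add.commute)
  hence X3: "X \<le> Phi s + Phi s" using Xfin by (simp only: ennreal_add_left_cancel_le) simp
  also have "\<dots> \<le> ennreal (f s + lam * H) + ennreal (f s + lam * H)" using Phis by (rule add_mono) (rule Phis)
  also have "\<dots> = ennreal (2 * (f s + lam * H))"
  proof -
    have "f s + lam * H \<ge> 0" using fnn[of s] lam by simp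
    hence "ennreal ((f s + lam * H) + (f s + lam * H)) = ennreal (f s + lam * H) + ennreal (f s + lam * H)"
      by (intro ennreal_plus) auto
    thus ?thesis by (metis mult_2)
  qed
  finally have Xb: "X \<le> ennreal (2 * (f s + lam * H))" .
  have gW: "(\<Sum>n<K. \<integral>\<^sup>+u. ennreal (q s n u) * ennreal (c1 * (R - rp u)) \<partial>count_space UNIV) \<le> X"
    unfolding X_def by (intro sum_mono nn_integral_mono mult_left_mono) (auto simp: w_def g_def)
  show ?thesis using gW Xb X2 unfolding lam_def C_def by (meson order_trans)
qed

end


context ch begin

lemma fam:
  fixes phi :: "'s \<Rightarrow> real"
  assumes pnn: "\<And>x. phi x \<ge> 0" and B: "B \<ge> 0"
    and bnd: "\<And>K. (\<Sum>n<K. \<integral>\<^sup>+u. ennreal (q s n u) * ennreal (phi u) \<partial>count_space UNIV) \<le> ennreal B"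
  shows "\<exists>S. ((\<lambda>(n,x). q s n x * phi x) has_sum S) UNIV \<and> 0 \<le> S \<and> S \<le> B"
proof -
  define b where "b n = (\<Sum>\<^sub>\<infinity>u. q s n u * phi u)" for n
  have conv: "(\<lambda>u. q s n u * phi u) summable_on UNIV \<and>
     ennreal (b n) = (\<integral>\<^sup>+u. ennreal (q s n u) * ennreal (phi u) \<partial>count_space UNIV)" for n
  proof -
    have "(\<integral>\<^sup>+u. ennreal (q s n u) * ennreal (phi u) \<partial>count_space UNIV)
        \<le> (\<Sum>k<Suc n. \<integral>\<^sup>+u. ennreal (q s k u) * ennreal (phi u) \<partial>count_space UNIV)"
      by (rule member_le_sum) auto
    also have "\<dots> \<le> ennreal B" by (rule bnd)
    finally have "(\<integral>\<^sup>+u. ennreal (q s n u * phi u) \<partial>count_space UNIV) \<noteq> \<infinity>"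
      by (auto simp: ennreal_mult q_nn pnn top_unique)
    from enn_conv[OF _ this] show ?thesis unfolding b_def by (simp add: ennreal_mult q_nn pnn)
  qed
  have bnn: "b n \<ge> 0" for n unfolding b_def by (intro infsum_nonneg mult_nonneg_nonneg q_nn pnn)
  have bpart: "(\<Sum>n<K. b n) \<le> B" for K
  proof -
    have "ennreal (\<Sum>n<K. b n) = (\<Sum>n<K. ennreal (b n))" using bnn by simp
    also have "\<dots> \<le> ennreal B" using conv bnd[of K] by simp
    finally show ?thesis using B by simp
  qed
  have sb: "summable b" by (rule summableI_nonneg_bounded[OF bnn bpart])
  have hb: "(b has_sum suminf b) UNIV"
    by (rule sums_nonneg_imp_has_sum) (use sb bnn in \<open>auto simp: summable_sums\<close>)
  have sle: "suminf b \<le> B" by (rule suminf_le_const[OF sb bpart])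
  have sge: "suminf b \<ge> 0" by (rule suminf_nonneg[OF sb bnn])
  have inner: "\<And>n. n \<in> UNIV \<Longrightarrow> ((\<lambda>x. (\<lambda>(n,x). q s n x * phi x) (n, x)) has_sum b n) UNIV"
    using conv unfolding b_def by (auto intro: has_sum_infsum)
  have summ: "(\<lambda>(n,x). q s n x * phi x) summable_on Sigma UNIV (\<lambda>_. UNIV)"
    by (rule summable_on_SigmaI[OF inner]) (use hb in \<open>auto intro: has_sum_imp_summable mult_nonneg_nonneg q_nn pnn\<close>)
  have "((\<lambda>(n,x). q s n x * phi x) has_sum suminf b) (Sigma UNIV (\<lambda>_. UNIV))"
    by (rule has_sum_SigmaI[OF inner hb summ])
  thus ?thesis using sle sge by auto
qed

end



theorem mainTheorem6:
  fixes P :: "'s::countable \<Rightarrow> 'a::finite \<Rightarrow> 's \<Rightarrow> real"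
    and r :: "'s \<Rightarrow> 'a \<Rightarrow> real"
    and pol :: "'s \<Rightarrow> 'a \<Rightarrow> real"
    and s0 :: 's
    and mu :: "'s \<Rightarrow> real"
    and f :: "'s \<Rightarrow> real"
    and c1 c2 :: real
  assumes "infinite (UNIV :: 's set)"
    and "mdp P"
    and "assumption_1b r"
    and "policy pol"
    and "ergodic P pol"
    and "stationary P pol mu"
    and "\<forall>s. f s \<ge> 0"
    and "c1 > 0" and "c2 \<ge> 0"
    and "\<forall>s. (\<lambda>s'. P_pi P pol s s' * f s') summable_on UNIV \<and>
             (\<Sum>\<^sub>\<infinity>s'. P_pi P pol s s' * f s') - f s \<le> c1 * r_pi r pol s + c2"
  shows "\<exists>c3 c4. c3 = 2 / c1 \<and> c3 \<ge> 0 \<and> c4 \<ge> 0 \<and>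
           (\<forall>s. V_terms P r pol s0 (avg_reward r pol mu) s summable_on UNIV \<and>
                rel_value P r pol s0 (avg_reward r pol mu) s \<ge> - c3 * f s - c4)"
proof -
  interpret ch P pol s0 using assms(2,4) by unfold_locales
  note c1 = assms(8) and c2 = assms(9) and fnn = assms(7)
  define rp where "rp = r_pi r pol"
  define J where "J = avg_reward r pol mu"
  have rmax: "rp x \<le> r_max r x" for x
  proof -
    have "r x a \<le> r_max r x" for a unfolding r_max_def by (intro Max_ge) auto
    hence "(\<Sum>a\<in>UNIV. pol x a * r x a) \<le> (\<Sum>a\<in>UNIV. pol x a * r_max r x)"
      using assms(4) unfolding policy_def by (intro sum_mono mult_left_mono) auto
    also have "\<dots> = r_max r x" using assms(4) unfolding policy_def by (simp add: sum_distrib_right[symmetric])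
    finally show ?thesis unfolding rp_def r_pi_def .
  qed
  define B where "B = {s. r_max r s \<ge> 0}"
  have finB: "finite B" using assms(3) unfolding assumption_1b_def B_def by blast
  define R where "R = 1 + (\<Sum>s\<in>B. \<bar>r_max r s\<bar>)"
  have R1: "R \<ge> 1" unfolding R_def by (simp add: sum_nonneg)
  have rpR: "rp x \<le> R" for x
  proof (cases "x \<in> B")
    case True
    have "r_max r x \<le> \<bar>r_max r x\<bar>" by simp
    also have "\<dots> \<le> (\<Sum>s\<in>B. \<bar>r_max r s\<bar>)" by (rule member_le_sum[OF True _ finB]) auto
    finally show ?thesis using rmax[of x] unfolding R_def by simp
  next
    case False then show ?thesis using rmax[of x] R1 unfolding B_def by simp
  qed
  define C where "C = c2 + c1 * R"
  have Cpos: "C > 0" unfolding C_def using c1 c2 R1 by (smt (verit) mult_pos_pos)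
  define A where "A = {x. c1 * (R - rp x) < 2 * (c2 + c1 * R)}"
  have finA: "finite A"
  proof -
    have "A \<subseteq> {s. r_max r s \<ge> R - 2 * C / c1}"
    proof
      fix x assume "x \<in> A"
      hence "c1 * (R - rp x) < 2 * C" unfolding A_def C_def by simp
      hence "R - rp x < 2 * C / c1" using c1 by (simp add: field_simps)
      thus "x \<in> {s. r_max r s \<ge> R - 2 * C / c1}" using rmax[of x] by simp
    qed
    moreover have "finite {s. r_max r s \<ge> R - 2 * C / c1}" using assms(3) unfolding assumption_1b_def by blast
    ultimately show ?thesis by (rule finite_subset)
  qed
  have irr: "\<forall>x. \<exists>n. Pn n x s0 > 0" using assms(5) unfolding ergodic_def irreducible_def by blast
  then obtain nf where nf: "\<And>x. Pn (nf x) x s0 > 0" by metis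
  define A' where "A' = A - {s0}"
  have finA': "finite A'" unfolding A'_def using finA by simp
  define H where "H = Max (insert 0 (nf ` A'))"
  define d where "d = Min (insert 1 ((\<lambda>x. Pn (nf x) x s0) ` A'))"
  have dpos: "d > 0" unfolding d_def using finA' nf by (simp add: Min_gr_iff)
  have dH: "m x H + ennreal d \<le> 1" if "x \<in> A" "x \<noteq> s0" for x
  proof -
    have xA': "x \<in> A'" unfolding A'_def using that by simp
    have "nf x \<le> H" unfolding H_def using finA' xA' by (intro Max_ge) auto
    hence "m x H \<le> m x (nf x)" by (rule m_mono')
    moreover have "d \<le> Pn (nf x) x s0" unfolding d_def using finA' xA' by (intro Min_le) auto
    hence "ennreal d \<le> ennreal (Pn (nf x) x s0)" by (rule ennreal_leI)
    ultimately have "m x H + ennreal d \<le> m x (nf x) + ennreal (Pn (nf x) x s0)" by (rule add_mono)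
    also have "\<dots> \<le> 1" by (rule m_hit)
    finally show ?thesis .
  qed
  have JR: "J \<le> R"
  proof (cases "(\<lambda>s. mu s * rp s) summable_on UNIV")
    case True
    have mu1: "(mu has_sum 1) UNIV" and munn: "\<And>s. mu s \<ge> 0"
      using assms(6) unfolding stationary_def by auto
    have "J = (\<Sum>\<^sub>\<infinity>s. mu s * rp s)" unfolding J_def avg_reward_def rp_def ..
    also have "\<dots> \<le> (\<Sum>\<^sub>\<infinity>s. mu s * R)"
      using True has_sum_cmult_left[OF mu1, of R] rpR munn
      by (intro infsum_mono) (auto intro: mult_left_mono has_sum_imp_summable)
    also have "\<dots> = R" using infsumI[OF has_sum_cmult_left[OF mu1, of R]] by simp
    finally show ?thesis .
  next
    case False
    hence "J = 0" unfolding J_def avg_reward_def rp_def by (simp add: infsum_not_exists)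
    thus ?thesis using R1 by simp
  qed
  define B0 where "B0 s = 2 * (f s + (2 * (c2 + c1 * R) / d) * H)" for s
  have B0nn: "B0 s \<ge> 0" for s unfolding B0_def using fnn dpos c1 c2 R1 by (auto intro!: add_nonneg_nonneg mult_nonneg_nonneg divide_nonneg_pos)
  show ?thesis
  proof (intro exI conjI allI)
    show "2 / c1 = 2 / c1" ..
    show "2 / c1 \<ge> 0" using c1 by simp
    show c4: "2 * (2 * C / d) * H / c1 \<ge> 0" using c1 Cpos dpos by simp
    fix s
    have bW: "(\<Sum>n<K. \<integral>\<^sup>+u. ennreal (q s n u) * ennreal (c1 * (R - rp u)) \<partial>count_space UNIV) \<le> ennreal (B0 s)
       \<and> ennreal (2 * (c2 + c1 * R)) * (\<Sum>n<K. m s n) \<le> ennreal (B0 s)" for K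
      unfolding B0_def
      by (rule bound_W[OF _ _ c1 c2 R1 rpR A_def dpos dH]) (use fnn assms(10) in \<open>auto simp: rp_def\<close>)
    have g2: "\<exists>S. ((\<lambda>(n,x). q s n x * (c1 * (R - rp x))) has_sum S) UNIV \<and> 0 \<le> S \<and> S \<le> B0 s"
      by (rule fam[OF _ B0nn]) (use bW c1 rpR in \<open>auto simp: mult_nonneg_nonneg\<close>)
    then obtain S2 where S2: "((\<lambda>(n,x). q s n x * (c1 * (R - rp x))) has_sum S2) UNIV" "0 \<le> S2" "S2 \<le> B0 s" by blast
    have g1: "\<exists>S. ((\<lambda>(n,x). q s n x * (2 * C)) has_sum S) UNIV \<and> 0 \<le> S \<and> S \<le> B0 s"
    proof (rule fam[OF _ B0nn])
      show "\<And>x. 0 \<le> 2 * C" using Cpos by simp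
      fix K
      have "(\<Sum>n<K. \<integral>\<^sup>+u. ennreal (q s n u) * ennreal (2 * C) \<partial>count_space UNIV) = ennreal (2 * C) * (\<Sum>n<K. m s n)"
        unfolding m_def sum_distrib_left by (intro sum.cong refl) (simp add: nn_integral_cmult mult.commute)
      thus "(\<Sum>n<K. \<integral>\<^sup>+u. ennreal (q s n u) * ennreal (2 * C) \<partial>count_space UNIV) \<le> ennreal (B0 s)"
        using bW[of K] unfolding C_def by simp
    qed
    then obtain S1 where S1: "((\<lambda>(n,x). q s n x * (2 * C)) has_sum S1) UNIV" "0 \<le> S1" by blast
    have comb: "((\<lambda>p. ((R - J) / (2 * C)) * (\<lambda>(n,x). q s n x * (2 * C)) p + (- 1 / c1) * (\<lambda>(n,x). q s n x * (c1 * (R - rp x))) p)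
        has_sum (((R - J) / (2 * C)) * S1 + (- 1 / c1) * S2)) UNIV"
      by (intro has_sum_add has_sum_cmult_right S1 S2)
    have eq: "V_terms P r pol s0 J s = (\<lambda>p. ((R - J) / (2 * C)) * (\<lambda>(n,x). q s n x * (2 * C)) p + (- 1 / c1) * (\<lambda>(n,x). q s n x * (c1 * (R - rp x))) p)"
      unfolding V_terms_def rp_def using Cpos c1 by (auto simp: field_simps)
    have hs: "(V_terms P r pol s0 J s has_sum (((R - J) / (2 * C)) * S1 + (- 1 / c1) * S2)) UNIV"
      using comb eq by simp
    show "V_terms P r pol s0 (avg_reward r pol mu) s summable_on UNIV"
      using hs unfolding J_def by (auto intro: has_sum_imp_summable)
    have "rel_value P r pol s0 J s = ((R - J) / (2 * C)) * S1 + (- 1 / c1) * S2"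
      unfolding rel_value_def using hs by (rule infsumI)
    also have "\<dots> \<ge> (- 1 / c1) * S2"
      using JR Cpos S1(2) by (simp add: divide_nonneg_pos)
    moreover have "(- 1 / c1) * S2 \<ge> - (2 / c1) * f s - 2 * (2 * C / d) * H / c1"
    proof -
      have "S2 / c1 \<le> B0 s / c1" using S2(3) c1 by (simp add: divide_right_mono)
      moreover have "B0 s / c1 = (2 / c1) * f s + 2 * (2 * C / d) * H / c1"
        unfolding B0_def C_def by (simp add: add_divide_distrib)
      moreover have "(- 1 / c1) * S2 = - (S2 / c1)" by simp
      ultimately show ?thesis by linarith
    qed
    ultimately show "rel_value P r pol s0 (avg_reward r pol mu) s \<ge> - (2 / c1) * f s - 2 * (2 * C / d) * H / c1"
      unfolding J_def by linarith
  qed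
qed



end
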